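(* Let $R$ be a commutative ring and $M$ a semisimple $R$-module that has a minimal second representation $M=\sum_{i=1}^n K_i$ whose set of main second attached primes $att^s(M)=\{Ann(K_1),\dots,Ann(K_n)\}$ satisfies $att^s(M)=Min(att^s(M))$ (i.e. these ideals are pairwise incomparable). Then the following are equivalent: (1) $M$ is a multiplication module; (2) every PS-hollow submodule of $M$ is simple; (3) every second submodule of $M$ is simple; (4) $M$ is a comultiplication module.
   Context: A submodule $N\neq 0$ of $M$ is second iff for every ideal $I\leq R$, $IN=N$ or $IN=0$. A second representation of $M$ is an expression $M=\sum_{i=1}^n K_i$ with each $K_i$ a second submodule; it is minimal if the ideals $Ann(K_i)$ are pairwise distinct and no $K_j$ is contained in $\sum_{i\neq j}K_i$. $Min(X)$ denotes the set of minimal elements of a set of ideals $X$ w.r.t. inclusion. An $R$-submodule $N\leq M$ is PS-hollow iff for every ideal $I\leq R$ and every submodule $L\leq M$: $N\subseteq IM+L$ implies $N\subseteq IM$ or $N\subseteq L$. $M$ is multiplication iff every submodule is $IM$ for some ideal $I$; $M$ is comultiplication iff $K=(0:_M(0:_R K))$ for every submodule $K\leq M$. *)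

theory Defs
  imports Main "HOL.Modules"
begin

text \<open>Setting: R is the commutative ring given by a type 'a::comm_ring_1, M is the whole
  carrier of type 'm::ab_group_add, and scale is the R-action; 'module scale' holds.\<close>

definition submod :: "('a::comm_ring_1 \<Rightarrow> 'm::ab_group_add \<Rightarrow> 'm) \<Rightarrow> 'm set \<Rightarrow> bool" where
  "submod scale N \<longleftrightarrow> module.subspace scale N"

definition ring_ideal :: "'a::comm_ring_1 set \<Rightarrow> bool" where
  "ring_ideal I \<longleftrightarrow> module.subspace ((*) :: 'a \<Rightarrow> 'a \<Rightarrow> 'a) I"

definition ideal_mult :: "('a::comm_ring_1 \<Rightarrow> 'm::ab_group_add \<Rightarrow> 'm) \<Rightarrow> 'a set \<Rightarrow> 'm set \<Rightarrow> 'm set" where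
  "ideal_mult scale I N = module.span scale {scale r x | r x. r \<in> I \<and> x \<in> N}"

definition sum_submod :: "'m::ab_group_add set \<Rightarrow> 'm set \<Rightarrow> 'm set" where
  "sum_submod A B = {a + b | a b. a \<in> A \<and> b \<in> B}"

definition Ann :: "('a::comm_ring_1 \<Rightarrow> 'm::ab_group_add \<Rightarrow> 'm) \<Rightarrow> 'm set \<Rightarrow> 'a set" where
  "Ann scale K = {r. \<forall>x\<in>K. scale r x = 0}"

definition colon_M :: "('a::comm_ring_1 \<Rightarrow> 'm::ab_group_add \<Rightarrow> 'm) \<Rightarrow> 'a set \<Rightarrow> 'm set" where
  "colon_M scale I = {x. \<forall>r\<in>I. scale r x = 0}"

definition simple_submod :: "('a::comm_ring_1 \<Rightarrow> 'm::ab_group_add \<Rightarrow> 'm) \<Rightarrow> 'm set \<Rightarrow> bool" where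
  "simple_submod scale N \<longleftrightarrow> submod scale N \<and> N \<noteq> {0} \<and>
     (\<forall>L. submod scale L \<and> L \<subseteq> N \<longrightarrow> L = {0} \<or> L = N)"

definition second_submod :: "('a::comm_ring_1 \<Rightarrow> 'm::ab_group_add \<Rightarrow> 'm) \<Rightarrow> 'm set \<Rightarrow> bool" where
  "second_submod scale N \<longleftrightarrow> submod scale N \<and> N \<noteq> {0} \<and>
     (\<forall>I. ring_ideal I \<longrightarrow> ideal_mult scale I N = N \<or> ideal_mult scale I N = {0})"

text \<open>PS-hollow submodule (taken to be nonzero); IM means I times the whole module.\<close>
definition ps_hollow :: "('a::comm_ring_1 \<Rightarrow> 'm::ab_group_add \<Rightarrow> 'm) \<Rightarrow> 'm set \<Rightarrow> bool" where
  "ps_hollow scale N \<longleftrightarrow> submod scale N \<and> N \<noteq> {0} \<and>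
     (\<forall>I L. ring_ideal I \<and> submod scale L \<longrightarrow>
        N \<subseteq> sum_submod (ideal_mult scale I UNIV) L \<longrightarrow>
        N \<subseteq> ideal_mult scale I UNIV \<or> N \<subseteq> L)"

definition multiplication_module :: "('a::comm_ring_1 \<Rightarrow> 'm::ab_group_add \<Rightarrow> 'm) \<Rightarrow> bool" where
  "multiplication_module scale \<longleftrightarrow>
     (\<forall>N. submod scale N \<longrightarrow> (\<exists>I. ring_ideal I \<and> N = ideal_mult scale I UNIV))"

definition comultiplication_module :: "('a::comm_ring_1 \<Rightarrow> 'm::ab_group_add \<Rightarrow> 'm) \<Rightarrow> bool" where
  "comultiplication_module scale \<longleftrightarrow>
     (\<forall>K. submod scale K \<longrightarrow> K = colon_M scale (Ann scale K))"

definition semisimple_module :: "('a::comm_ring_1 \<Rightarrow> 'm::ab_group_add \<Rightarrow> 'm) \<Rightarrow> bool" where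
  "semisimple_module scale \<longleftrightarrow>
     module.span scale (\<Union>{S. simple_submod scale S}) = UNIV"

definition min_second_rep :: "('a::comm_ring_1 \<Rightarrow> 'm::ab_group_add \<Rightarrow> 'm) \<Rightarrow> nat \<Rightarrow> (nat \<Rightarrow> 'm set) \<Rightarrow> bool" where
  "min_second_rep scale n K \<longleftrightarrow>
     (\<forall>i<n. second_submod scale (K i)) \<and>
     module.span scale (\<Union>i<n. K i) = UNIV \<and>
     (\<forall>i<n. \<forall>j<n. i \<noteq> j \<longrightarrow> Ann scale (K i) \<noteq> Ann scale (K j)) \<and>
     (\<forall>j<n. \<not> K j \<subseteq> module.span scale (\<Union>i\<in>{..<n} - {j}. K i))"

definition Min_set :: "'x set set \<Rightarrow> 'x set set" where
  "Min_set X = {I \<in> X. \<forall>J\<in>X. J \<subseteq> I \<longrightarrow> J = I}"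

end

theory Submission
  imports Defs
begin


lemma module_mult: "module ((*) :: 'a::comm_ring_1 \<Rightarrow> 'a \<Rightarrow> 'a)"
  by unfold_locales (auto simp: algebra_simps)

lemma ring_idealI:
  assumes "(0::'a::comm_ring_1) \<in> I" "\<And>x y. x \<in> I \<Longrightarrow> y \<in> I \<Longrightarrow> x + y \<in> I"
    "\<And>c x. x \<in> I \<Longrightarrow> c * x \<in> I"
  shows "ring_ideal I"
  unfolding ring_ideal_def using assms by (simp add: module.subspace_def[OF module_mult])

context module
begin

lemma simple_elem:
  assumes S: "simple_submod scale S" and s: "s \<in> S" and rs: "r *s s \<noteq> 0"
  shows "\<exists>u. u *s (r *s s) = s"
proof -
  have sub: "subspace S" using S by (simp add: simple_submod_def submod_def)
  have rsS: "r *s s \<in> S" using sub s subspace_scale by blast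
  have "span {r *s s} \<subseteq> S" using rsS sub span_minimal by blast
  moreover have "submod scale (span {r *s s})" by (simp add: submod_def)
  moreover have "span {r *s s} \<noteq> {0}" using rs span_base by blast
  ultimately have "span {r *s s} = S" using S unfolding simple_submod_def by blast
  then have "s \<in> range (\<lambda>k. k *s (r *s s))" using s span_singleton by auto
  then obtain k where "s = k *s (r *s s)" by auto
  then show ?thesis by metis
qed

lemma Ann_mult: "r \<in> Ann scale N \<Longrightarrow> a * r \<in> Ann scale N"
  by (simp add: Ann_def flip: scale_scale)

lemma Ann_add: "r \<in> Ann scale N \<Longrightarrow> s \<in> Ann scale N \<Longrightarrow> r + s \<in> Ann scale N"
  by (simp add: Ann_def scale_left_distrib)

end

locale csetup = module +
  assumes semis: "semisimple_module scale"
begin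

lemma reg: "\<exists>u. u *s (r *s (r *s x)) = r *s x"
proof -
  have x: "x \<in> span (\<Union>{S. simple_submod scale S})"
    using semis by (simp add: semisimple_module_def)
  have "\<forall>r. \<exists>u. (u*r*r) *s x = r *s x"
  proof (rule span_induct[OF x])
    show "subspace {x. \<forall>r. \<exists>u. (u*r*r) *s x = r *s x}"
    proof (rule subspaceI; unfold mem_Collect_eq)
      show "\<forall>r. \<exists>u. (u*r*r) *s 0 = r *s (0::'b)" by simp
    next
      fix y z :: 'b
      assume hy: "\<forall>r. \<exists>u. (u*r*r) *s y = r *s y" and hz: "\<forall>r. \<exists>u. (u*r*r) *s z = r *s z"
      show "\<forall>r. \<exists>u. (u*r*r) *s (y + z) = r *s (y + z)"
      proof
      fix r
      obtain a where a: "(a*r*r) *s y = r *s y" using hy by blast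
      obtain b where b: "(b*r*r) *s z = r *s z" using hz by blast
      let ?c = "a + b - a*b*r"
      have 1: "(?c*r*r) *s y = r *s y"
      proof -
        have "(?c*r*r) = a*r*r + b*r*r - (b*r)*(a*r*r)" by (simp add: algebra_simps)
        then have "(?c*r*r) *s y = (a*r*r) *s y + (b*r*r) *s y - (b*r) *s ((a*r*r) *s y)"
          by (simp add: scale_left_distrib scale_left_diff_distrib)
        also have "\<dots> = r *s y" using a by (simp add: mult.assoc mult.commute mult.left_commute)
        finally show ?thesis .
      qed
      have 2: "(?c*r*r) *s z = r *s z"
      proof -
        have "(?c*r*r) = a*r*r + b*r*r - (a*r)*(b*r*r)" by (simp add: algebra_simps)
        then have "(?c*r*r) *s z = (a*r*r) *s z + (b*r*r) *s z - (a*r) *s ((b*r*r) *s z)"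
          by (simp add: scale_left_distrib scale_left_diff_distrib)
        also have "\<dots> = r *s z" using b by (simp add: mult.assoc mult.commute mult.left_commute)
        finally show ?thesis .
      qed
      show "\<exists>u. (u*r*r) *s (y + z) = r *s (y + z)"
        using 1 2 by (intro exI[of _ ?c]) (simp add: scale_right_distrib)
      qed
    next
      fix c :: 'a and y :: 'b
      assume hy: "\<forall>r. \<exists>u. (u*r*r) *s y = r *s y"
      show "\<forall>r. \<exists>u. (u*r*r) *s (c *s y) = r *s (c *s y)"
      proof
        fix r
        obtain u where "(u*r*r) *s y = r *s y" using hy by blast
        then have "(u*r*r) *s (c *s y) = r *s (c *s y)"
          using scale_left_commute[of "u*r*r" c y] scale_left_commute[of r c y] by simp
        then show "\<exists>u. (u*r*r) *s (c *s y) = r *s (c *s y)" by blast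
      qed
    qed
  next
    fix x assume "x \<in> \<Union>{S. simple_submod scale S}"
    then obtain S where S: "simple_submod scale S" and xS: "x \<in> S" by auto
    show "\<forall>r. \<exists>u. (u*r*r) *s x = r *s x"
    proof
    fix r
    show "\<exists>u. (u*r*r) *s x = r *s x"
    proof (cases "r *s x = 0")
      case True then show ?thesis by (intro exI[of _ 0]) simp
    next
      case False
      obtain u where u: "u *s (r *s x) = x" using simple_elem[OF S xS False] by blast
      have sub: "subspace S" using S by (simp add: simple_submod_def submod_def)
      have rxS: "r *s x \<in> S" using sub xS subspace_scale by blast
      have "r *s (r *s x) \<noteq> 0"
      proof
        assume h: "r *s (r *s x) = 0"
        have "r *s x = r *s (u *s (r *s x))" using u by simp
        also have "\<dots> = u *s (r *s (r *s x))" by (rule scale_left_commute)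
        finally have "r *s x = u *s (r *s (r *s x))" .
        then show False using h False by (metis scale_zero_right)
      qed
      from simple_elem[OF S rxS this] obtain v where "v *s (r *s (r *s x)) = r *s x" by blast
      then show ?thesis by (intro exI[of _ v]) (simp add: mult.assoc)
    qed
    qed
  qed
  then obtain u where "(u*r*r) *s x = r *s x" by blast
  then show ?thesis by (intro exI[of _ u]) (simp add: mult.assoc)
qed

lemma killer:
  assumes one: "1 \<notin> p" and prime: "\<And>a b. a * b \<in> p \<Longrightarrow> a \<in> p \<or> b \<in> p"
    and H: "\<And>S s. simple_submod scale S \<Longrightarrow> s \<in> S \<Longrightarrow> s \<noteq> 0 \<Longrightarrow> \<exists>r. r \<notin> p \<and> r *s s = 0"
  shows "\<exists>r. r \<notin> p \<and> r *s x = 0"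
proof -
  have x: "x \<in> span (\<Union>{S. simple_submod scale S})"
    using semis by (simp add: semisimple_module_def)
  show ?thesis
  proof (rule span_induct[OF x])
    show "subspace {x. \<exists>r. r \<notin> p \<and> r *s x = 0}"
    proof (rule subspaceI; unfold mem_Collect_eq)
      show "\<exists>r. r \<notin> p \<and> r *s (0::'b) = 0" using one by (intro exI[of _ 1]) simp
    next
      fix y z
      assume "\<exists>r. r \<notin> p \<and> r *s y = 0" "\<exists>r. r \<notin> p \<and> r *s z = 0"
      then obtain r1 r2 where h: "r1 \<notin> p" "r1 *s y = 0" "r2 \<notin> p" "r2 *s z = 0" by blast
      have "(r1*r2) *s y = r2 *s (r1 *s y)" by (simp add: mult.commute)
      then have "(r1*r2) *s y = 0" using h by simp
      moreover have "(r1*r2) *s z = 0" using h by (simp flip: scale_scale)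
      moreover have "r1*r2 \<notin> p" using h prime by blast
      ultimately show "\<exists>r. r \<notin> p \<and> r *s (y + z) = 0"
        by (intro exI[of _ "r1*r2"]) (simp add: scale_right_distrib)
    next
      fix c y
      assume "\<exists>r. r \<notin> p \<and> r *s y = 0"
      then obtain r where "r \<notin> p" "r *s y = 0" by blast
      then have "r \<notin> p \<and> r *s (c *s y) = 0" by (simp add: scale_left_commute[of r c] del: scale_scale)
      then show "\<exists>r. r \<notin> p \<and> r *s (c *s y) = 0" by blast
    qed
  next
    fix x assume "x \<in> \<Union>{S. simple_submod scale S}"
    then obtain S where S: "simple_submod scale S" and xS: "x \<in> S" by auto
    show "\<exists>r. r \<notin> p \<and> r *s x = 0"
    proof (cases "x = 0")
      case True then show ?thesis using one by (intro exI[of _ 1]) simp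
    next
      case False then show ?thesis using H[OF S xS] by blast
    qed
  qed
qed

lemma second_princ:
  assumes N: "second_submod scale N"
  shows "(\<forall>x\<in>N. r *s x = 0) \<or> (\<forall>y\<in>N. \<exists>z\<in>N. y = r *s z)"
proof -
  have sub: "subspace N" using N by (simp add: second_submod_def submod_def)
  let ?I = "range (\<lambda>k. k * r)"
  have I: "ring_ideal ?I"
  proof (rule ring_idealI)
    show "0 \<in> ?I" by (metis mult_zero_left rangeI)
    show "x + y \<in> ?I" if "x \<in> ?I" "y \<in> ?I" for x y using that by (auto, metis distrib_right rangeI)
    show "c * x \<in> ?I" if "x \<in> ?I" for c x using that by (auto, metis mult.assoc rangeI)
  qed
  let ?T = "{r *s z | z. z \<in> N}"
  have T: "subspace ?T"
  proof (rule subspaceI)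
    show "0 \<in> ?T" using subspace_0[OF sub] by (auto intro!: exI[of _ 0])
  next
    fix x y assume "x \<in> ?T" "y \<in> ?T"
    then obtain a b where "x = r *s a" "y = r *s b" "a \<in> N" "b \<in> N" by auto
    then show "x + y \<in> ?T" using subspace_add[OF sub] by (auto simp: scale_right_distrib[symmetric])
  next
    fix c x assume "x \<in> ?T"
    then obtain a where "x = r *s a" "a \<in> N" by auto
    then have "c *s x = r *s (c *s a)" "c *s a \<in> N" using subspace_scale[OF sub] by (auto simp: mult.commute)
    then show "c *s x \<in> ?T" by blast
  qed
  have gen: "{scale a x | a x. a \<in> ?I \<and> x \<in> N} \<subseteq> ?T"
  proof clarify
    fix a x k assume "x \<in> N"
    then have "k *s x \<in> N" using subspace_scale[OF sub] by blast
    moreover have "(k * r) *s x = r *s (k *s x)" by (simp add: mult.commute)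
    ultimately show "\<exists>z. (k * r) *s x = r *s z \<and> z \<in> N" by blast
  qed
  have im: "ideal_mult scale ?I N \<subseteq> ?T"
    unfolding ideal_mult_def using span_minimal[OF gen T] .
  have rz: "r *s z \<in> ideal_mult scale ?I N" if "z \<in> N" for z
  proof -
    have "r \<in> ?I" by (metis mult_1 rangeI)
    then have "r *s z \<in> {scale a x | a x. a \<in> ?I \<and> x \<in> N}" using that by blast
    then show ?thesis unfolding ideal_mult_def by (rule span_base)
  qed
  from N I have "ideal_mult scale ?I N = N \<or> ideal_mult scale ?I N = {0}"
    by (simp add: second_submod_def)
  then show ?thesis
  proof
    assume "ideal_mult scale ?I N = N" then show ?thesis using im by blast
  next
    assume "ideal_mult scale ?I N = {0}" then show ?thesis using rz by blast
  qed
qed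

lemma second_maxi:
  assumes N: "second_submod scale N"
  shows "\<forall>r. r \<in> Ann scale N \<or> (\<exists>u. 1 - u * r \<in> Ann scale N)"
proof -
  let ?p = "Ann scale N"
  have sub: "subspace N" using N by (simp add: second_submod_def submod_def)
  obtain y where yN: "y \<in> N" and y0: "y \<noteq> 0"
  proof -
    have "N \<noteq> {0}" using N by (simp add: second_submod_def)
    then have "\<exists>y\<in>N. y \<noteq> 0" using subspace_0[OF sub] by auto
    then show ?thesis using that by blast
  qed
  have one: "1 \<notin> ?p" using yN y0 by (auto simp: Ann_def)
  have prime: "a \<in> ?p \<or> b \<in> ?p" if ab: "a * b \<in> ?p" for a b
  proof (cases "a \<in> ?p")
    case True then show ?thesis by simp
  next
    case False
    then have "a \<notin> ?p" .
    then have "\<forall>w\<in>N. \<exists>z\<in>N. w = a *s z" using second_princ[OF N, of a] unfolding Ann_def mem_Collect_eq by blast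
    then have "b *s x = 0" if "x \<in> N" for x
    proof -
      have "\<exists>z\<in>N. x = a *s z" using bspec[OF \<open>\<forall>w\<in>N. \<exists>z\<in>N. w = a *s z\<close> that] .
      then obtain z where "z \<in> N" "x = a *s z" by blast
      then show ?thesis using ab by (simp add: Ann_def mult.commute)
    qed
    then have "b \<in> ?p" by (simp add: Ann_def)
    then show ?thesis by simp
  qed
  have "\<exists>S s. simple_submod scale S \<and> s \<in> S \<and> s \<noteq> 0 \<and> (\<forall>r. r \<notin> ?p \<longrightarrow> r *s s \<noteq> 0)"
  proof (rule ccontr)
    assume "\<not> ?thesis"
    then have H: "\<And>S s. simple_submod scale S \<Longrightarrow> s \<in> S \<Longrightarrow> s \<noteq> 0 \<Longrightarrow> \<exists>r. r \<notin> ?p \<and> r *s s = 0"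
      by blast
    have "\<exists>r. r \<notin> ?p \<and> r *s y = 0"
      apply (rule killer)
        apply (rule one)
       apply (erule prime)
      apply (erule (2) H)
      done
    then obtain r where r: "r \<notin> ?p" "r *s y = 0" by blast
    then have "\<forall>w\<in>N. \<exists>z\<in>N. w = r *s z" using second_princ[OF N, of r] unfolding Ann_def mem_Collect_eq by blast
    then obtain z where z: "y = r *s z" using yN by blast
    obtain u where u: "u *s (r *s (r *s z)) = r *s z" using reg by blast
    have rr: "r *s (r *s z) = 0" using z r(2) by (simp del: scale_scale)
    have "r *s z = u *s (r *s (r *s z))" using u by (rule sym)
    also have "\<dots> = u *s 0" by (simp only: rr)
    also have "\<dots> = 0" by simp
    finally have "y = 0" using z by simp
    then show False using y0 by simp
  qed
  then obtain S s where S: "simple_submod scale S" and s: "s \<in> S" "s \<noteq> 0"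
    and ns: "\<And>r. r \<notin> ?p \<Longrightarrow> r *s s \<noteq> 0" by blast
  show ?thesis
  proof (intro allI)
    fix r
    show "r \<in> ?p \<or> (\<exists>u. 1 - u * r \<in> ?p)"
    proof (cases "r \<in> ?p")
      case True then show ?thesis by simp
    next
      case False
      then obtain u where u: "u *s (r *s s) = s" using simple_elem[OF S s(1) ns] by blast
      have "(1 - u * r) *s s = 0" using u by (simp add: scale_left_diff_distrib)
      then have "1 - u * r \<in> ?p" using ns by blast
      then show ?thesis by blast
    qed
  qed
qed

end


lemma (in module) prod_fix:
  assumes "finite F" "\<And>j. j \<in> F \<Longrightarrow> f j *s x = x"
  shows "prod f F *s x = x"
  using assms by (induction F rule: finite_induct) (simp_all del: scale_scale add: scale_scale[symmetric])

locale crep = csetup +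
  fixes n :: nat and K :: "nat \<Rightarrow> 'b set"
  assumes rep: "min_second_rep scale n K"
begin

lemma Ksec: "i < n \<Longrightarrow> second_submod scale (K i)"
  using rep by (simp add: min_second_rep_def)

lemma Ksub: "i < n \<Longrightarrow> subspace (K i)"
  using Ksec by (simp add: second_submod_def submod_def)

lemma Knz: "i < n \<Longrightarrow> K i \<noteq> {0}"
  using Ksec by (simp add: second_submod_def)

lemma spanK: "x \<in> span (\<Union>i<n. K i)"
  using rep by (simp add: min_second_rep_def)

lemma Kdist: "i < n \<Longrightarrow> j < n \<Longrightarrow> i \<noteq> j \<Longrightarrow> Ann scale (K i) \<noteq> Ann scale (K j)"
  using rep by (simp add: min_second_rep_def)

lemma maxK: "i < n \<Longrightarrow> r \<in> Ann scale (K i) \<or> (\<exists>u. 1 - u * r \<in> Ann scale (K i))"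
  using second_maxi[OF Ksec] by blast

lemma one_notin: "i < n \<Longrightarrow> 1 \<notin> Ann scale (K i)"
proof
  assume i: "i < n" and "1 \<in> Ann scale (K i)"
  then have "\<forall>x\<in>K i. x = 0" by (simp add: Ann_def)
  moreover have "0 \<in> K i" using Ksub[OF i] subspace_0 by blast
  ultimately have "K i = {0}" by blast
  then show False using Knz[OF i] by blast
qed

lemma Kfix: "i < n \<Longrightarrow> 1 - c \<in> Ann scale (K i) \<Longrightarrow> x \<in> K i \<Longrightarrow> c *s x = x"
  by (simp add: Ann_def scale_left_diff_distrib)

lemma ann_elem: "i < n \<Longrightarrow> y \<in> K i \<Longrightarrow> y \<noteq> 0 \<Longrightarrow> r *s y = 0 \<Longrightarrow> r \<in> Ann scale (K i)"
proof (rule ccontr)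
  assume i: "i < n" and y: "y \<in> K i" "y \<noteq> 0" "r *s y = 0" and r: "r \<notin> Ann scale (K i)"
  then obtain u where u: "1 - u * r \<in> Ann scale (K i)" using maxK by blast
  have "(u * r) *s y = y" using Kfix[OF i u y(1)] .
  moreover have "(u * r) *s y = u *s (r *s y)" by simp
  ultimately show False using y by simp
qed

lemma sub_eq: "i < n \<Longrightarrow> Ann scale (K i) \<subseteq> Q \<Longrightarrow> 1 \<notin> Q \<Longrightarrow>
   (\<And>a q. q \<in> Q \<Longrightarrow> a * q \<in> Q) \<Longrightarrow> (\<And>a b. a \<in> Q \<Longrightarrow> b \<in> Q \<Longrightarrow> a + b \<in> Q) \<Longrightarrow>
   Q = Ann scale (K i)"
proof (rule ccontr)
  assume i: "i < n" and sub: "Ann scale (K i) \<subseteq> Q" and one: "1 \<notin> Q"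
    and m: "\<And>a q. q \<in> Q \<Longrightarrow> a * q \<in> Q" and ad: "\<And>a b. a \<in> Q \<Longrightarrow> b \<in> Q \<Longrightarrow> a + b \<in> Q"
    and ne: "Q \<noteq> Ann scale (K i)"
  then obtain r where r: "r \<in> Q" "r \<notin> Ann scale (K i)" by blast
  then obtain u where u: "1 - u * r \<in> Ann scale (K i)" using maxK[OF i] by blast
  have "(1 - u * r) + u * r \<in> Q" using ad[OF _ m[OF r(1)]] u sub by blast
  then show False using one by simp
qed

lemma sep: "i < n \<Longrightarrow> j < n \<Longrightarrow> i \<noteq> j \<Longrightarrow> \<exists>c. c \<in> Ann scale (K j) \<and> 1 - c \<in> Ann scale (K i)"
proof -
  assume i: "i < n" and j: "j < n" and ij: "i \<noteq> j"
  have "\<not> Ann scale (K j) \<subseteq> Ann scale (K i)"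
  proof
    assume "Ann scale (K j) \<subseteq> Ann scale (K i)"
    then have "Ann scale (K i) = Ann scale (K j)"
      using sub_eq[OF j _ one_notin[OF i]] Ann_mult Ann_add by blast
    then show False using Kdist[OF i j ij] by blast
  qed
  then obtain r where r: "r \<in> Ann scale (K j)" "r \<notin> Ann scale (K i)" by blast
  then obtain u where u: "1 - u * r \<in> Ann scale (K i)" using maxK[OF i] by blast
  have "u * r \<in> Ann scale (K j)" using Ann_mult[OF r(1)] .
  then show ?thesis using u by blast
qed

definition cc :: "nat \<Rightarrow> nat \<Rightarrow> 'a" where
  "cc i j = (SOME c. c \<in> Ann scale (K j) \<and> 1 - c \<in> Ann scale (K i))"

definition ee :: "nat \<Rightarrow> 'a" where
  "ee i = (\<Prod>j\<in>{..<n} - {i}. cc i j)"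

lemma cc: "i < n \<Longrightarrow> j < n \<Longrightarrow> i \<noteq> j \<Longrightarrow> cc i j \<in> Ann scale (K j) \<and> 1 - cc i j \<in> Ann scale (K i)"
  unfolding cc_def using sep by (rule someI_ex)

lemma E1: "i < n \<Longrightarrow> x \<in> K i \<Longrightarrow> ee i *s x = x"
proof -
  assume i: "i < n" and x: "x \<in> K i"
  show ?thesis unfolding ee_def
  proof (rule prod_fix)
    fix j assume "j \<in> {..<n} - {i}"
    then have j: "j < n" "i \<noteq> j" by auto
    show "cc i j *s x = x" using Kfix[OF i _ x] cc[OF i j] by blast
  qed simp
qed

lemma E2: "i < n \<Longrightarrow> j < n \<Longrightarrow> j \<noteq> i \<Longrightarrow> ee i \<in> Ann scale (K j)"
proof -
  assume i: "i < n" and j: "j < n" and ji: "j \<noteq> i"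
  have "ee i = cc i j * (\<Prod>k\<in>{..<n} - {i} - {j}. cc i k)"
    unfolding ee_def using i j ji by (subst prod.remove[of _ j]) auto
  moreover have "(\<Prod>k\<in>{..<n} - {i} - {j}. cc i k) * cc i j \<in> Ann scale (K j)"
    by (rule Ann_mult) (use cc[OF i j ji[symmetric]] in blast)
  ultimately show ?thesis by (simp add: mult.commute)
qed

lemma E2': "i < n \<Longrightarrow> j < n \<Longrightarrow> j \<noteq> i \<Longrightarrow> x \<in> K j \<Longrightarrow> ee i *s x = 0"
  using E2 by (auto simp: Ann_def)

lemma E3: "i < n \<Longrightarrow> ee i *s x \<in> K i"
proof -
  assume i: "i < n"
  show ?thesis
  proof (rule span_induct[where P="\<lambda>x. ee i *s x \<in> K i", OF spanK[of x]])
    show "subspace {x. ee i *s x \<in> K i}"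
      using Ksub[OF i] by (auto simp: subspace_def scale_right_distrib scale_left_commute[of "ee i"] simp del: scale_scale)
  next
    fix x assume "x \<in> (\<Union>i<n. K i)"
    then obtain j where j: "j < n" "x \<in> K j" by auto
    show "ee i *s x \<in> K i"
    proof (cases "j = i")
      case True then show ?thesis using E1 i j by simp
    next
      case False then show ?thesis using E2'[OF i j(1) False j(2)] subspace_0[OF Ksub[OF i]] by simp
    qed
  qed
qed

lemma E4: "x = (\<Sum>i<n. ee i *s x)"
proof (rule span_induct[where P="\<lambda>x. x = (\<Sum>i<n. ee i *s x)", OF spanK[of x]])
  show "subspace {x. x = (\<Sum>i<n. ee i *s x)}"
  proof (rule subspaceI; unfold mem_Collect_eq)
    show "(0::'b) = (\<Sum>i<n. ee i *s 0)" by simp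
  next
    fix x y :: 'b assume "x = (\<Sum>i<n. ee i *s x)" "y = (\<Sum>i<n. ee i *s y)"
    then show "x + y = (\<Sum>i<n. ee i *s (x + y))" by (simp add: scale_right_distrib sum.distrib)
  next
    fix c x assume h: "x = (\<Sum>i<n. ee i *s x)"
    have "c *s x = c *s (\<Sum>i<n. ee i *s x)" using h by simp
    also have "\<dots> = (\<Sum>i<n. c *s (ee i *s x))" by (rule scale_sum_right)
    also have "\<dots> = (\<Sum>i<n. ee i *s (c *s x))" by (simp only: scale_left_commute[of c])
    finally show "c *s x = (\<Sum>i<n. ee i *s (c *s x))" .
  qed
next
  fix x assume "x \<in> (\<Union>i<n. K i)"
  then obtain j where j: "j < n" "x \<in> K j" by auto
  have "(\<Sum>i<n. ee i *s x) = (\<Sum>i<n. if i = j then x else 0)"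
  proof (rule sum.cong)
    fix k assume "k \<in> {..<n}"
    then have k: "k < n" by simp
    show "ee k *s x = (if k = j then x else 0)"
    proof (cases "k = j")
      case True then show ?thesis using E1 j by simp
    next
      case False then show ?thesis using E2'[OF k j(1) _ j(2)] by simp
    qed
  qed simp
  also have "\<dots> = x" using j by simp
  finally show "x = (\<Sum>i<n. ee i *s x)" by simp
qed

lemma E5: "i < n \<Longrightarrow> ee i *s (ee i *s x) = ee i *s x"
  using E1 E3 by blast

lemma Kmult: "i < n \<Longrightarrow> r \<notin> Ann scale (K i) \<Longrightarrow> x \<in> K i \<Longrightarrow> \<exists>u. (u * r) *s x = x"
  using maxK Kfix by blast

end


lemma princ_ideal: "ring_ideal (range (\<lambda>k. k * (r::'a::comm_ring_1)))"
proof (rule ring_idealI)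
  show "0 \<in> range (\<lambda>k. k * r)" by (metis mult_zero_left rangeI)
  show "x + y \<in> range (\<lambda>k. k * r)" if "x \<in> range (\<lambda>k. k * r)" "y \<in> range (\<lambda>k. k * r)" for x y
    using that by (auto, metis distrib_right rangeI)
  show "c * x \<in> range (\<lambda>k. k * r)" if "x \<in> range (\<lambda>k. k * r)" for c x
    using that by (auto, metis mult.assoc rangeI)
qed

context crep
begin

lemma nz: "N \<noteq> {0} \<Longrightarrow> subspace N \<Longrightarrow> \<exists>y\<in>N. y \<noteq> 0"
  using subspace_0 by blast

lemma exists_i: "y \<noteq> 0 \<Longrightarrow> \<exists>i<n. ee i *s y \<noteq> 0"
proof (rule ccontr)
  assume y: "y \<noteq> 0" and "\<not> (\<exists>i<n. ee i *s y \<noteq> 0)"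
  then have "\<forall>i<n. ee i *s y = 0" by blast
  then have "(\<Sum>i<n. ee i *s y) = 0" by simp
  then show False using E4[of y] y by simp
qed

lemma sum_single:
  assumes i: "i < n" and h: "\<And>k. k < n \<Longrightarrow> k \<noteq> i \<Longrightarrow> ee k *s z = 0"
  shows "z = ee i *s z"
proof -
  have "(\<Sum>k<n. ee k *s z) = (\<Sum>k<n. if k = i then ee i *s z else 0)"
    by (rule sum.cong) (auto simp: h)
  also have "\<dots> = ee i *s z" using i by simp
  finally show ?thesis using E4[of z] by simp
qed

lemma ann_IM:
  assumes i: "i < n" and I: "I \<subseteq> Ann scale (K i)" and z: "z \<in> ideal_mult scale I UNIV"
  shows "ee i *s z = 0"
proof (rule span_induct[where P="\<lambda>z. ee i *s z = 0", OF z[unfolded ideal_mult_def]])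
  show "subspace {z. ee i *s z = 0}"
    by (auto simp: subspace_def scale_right_distrib scale_left_commute[of "ee i"] simp del: scale_scale)
next
  fix x assume "x \<in> {scale r x |r x. r \<in> I \<and> x \<in> UNIV}"
  then obtain r y where x: "x = r *s y" and r: "r \<in> I" by blast
  have "ee i *s y \<in> K i" using E3[OF i] .
  then have "r *s (ee i *s y) = 0" using r I by (auto simp: Ann_def simp del: scale_scale)
  moreover have "ee i *s x = r *s (ee i *s y)" using x by (simp add: mult.commute)
  ultimately show "ee i *s x = 0" by simp
qed

lemma K_IM:
  assumes i: "i < n" and r: "r \<in> I" "r \<notin> Ann scale (K i)"
  shows "K i \<subseteq> ideal_mult scale I UNIV"
proof
  fix w assume w: "w \<in> K i"
  obtain u where u: "(u * r) *s w = w" using Kmult[OF i r(2) w] by blast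
  have "w = r *s (u *s w)" using u by (simp add: mult.commute)
  then have "w \<in> {scale r x |r x. r \<in> I \<and> x \<in> UNIV}" using r(1) by blast
  then show "w \<in> ideal_mult scale I UNIV" unfolding ideal_mult_def by (rule span_base)
qed

lemma IM_sub:
  assumes N: "subspace N" and h: "\<And>r x. r \<in> I \<Longrightarrow> r *s x \<in> N"
  shows "ideal_mult scale I UNIV \<subseteq> N"
  unfolding ideal_mult_def by (rule span_minimal) (use h N in auto)

lemma fill:
  assumes D: "simple_submod scale (K i)" and L: "subspace L" and w: "w \<in> L" "w \<in> K i" "w \<noteq> 0"
  shows "K i \<subseteq> L"
proof -
  have "submod scale (L \<inter> K i)" using L D subspace_inter by (simp add: submod_def simple_submod_def)
  moreover have "L \<inter> K i \<noteq> {0}" using w by blast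
  ultimately have "L \<inter> K i = K i" using D unfolding simple_submod_def by blast
  then show ?thesis by blast
qed

lemma sec_in:
  assumes N: "second_submod scale N"
  shows "\<exists>i<n. N \<subseteq> K i"
proof -
  have sub: "subspace N" using N by (simp add: second_submod_def submod_def)
  have "N \<noteq> {0}" using N by (simp add: second_submod_def)
  then obtain y where y: "y \<in> N" "y \<noteq> 0" using nz[OF _ sub] by blast
  obtain i where i: "i < n" and ey: "ee i *s y \<noteq> 0" using exists_i[OF y(2)] by blast
  have wN: "ee i *s y \<in> N" using subspace_scale[OF sub y(1)] .
  have wK: "ee i *s y \<in> K i" using E3[OF i] .
  have sub1: "Ann scale N \<subseteq> Ann scale (K i)"
  proof
    fix r assume "r \<in> Ann scale N"
    then have "r *s (ee i *s y) = 0" using wN by (auto simp: Ann_def)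
    then show "r \<in> Ann scale (K i)" using ann_elem[OF i wK ey] by blast
  qed
  have eq: "Ann scale (K i) \<subseteq> Ann scale N"
  proof
    fix r assume r: "r \<in> Ann scale (K i)"
    show "r \<in> Ann scale N"
    proof (rule ccontr)
      assume "r \<notin> Ann scale N"
      then obtain u where u: "1 - u * r \<in> Ann scale N" using second_maxi[OF N] by blast
      have "(1 - u * r) + u * r \<in> Ann scale (K i)"
        using Ann_add[OF _ Ann_mult[OF r]] u sub1 by blast
      then show False using one_notin[OF i] by simp
    qed
  qed
  have "N \<subseteq> K i"
  proof
    fix z assume z: "z \<in> N"
    have "ee k *s z = 0" if "k < n" "k \<noteq> i" for k
    proof -
      have "ee k \<in> Ann scale N" using E2[OF that(1) i] that(2) eq by blast
      then show ?thesis using z by (auto simp: Ann_def)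
    qed
    then have "z = ee i *s z" using sum_single[OF i] by blast
    then show "z \<in> K i" using E3[OF i] by metis
  qed
  then show ?thesis using i by blast
qed

lemma eq_K:
  assumes D: "simple_submod scale (K i)" and L: "subspace L" "L \<subseteq> K i" "L \<noteq> {0}"
  shows "L = K i"
  using D L unfolding simple_submod_def submod_def by blast

abbreviation "DD \<equiv> \<forall>i<n. simple_submod scale (K i)"

lemma T3D: "(\<forall>N. second_submod scale N \<longrightarrow> simple_submod scale N) \<Longrightarrow> DD"
  using Ksec by blast

lemma TD3: "DD \<Longrightarrow> second_submod scale N \<Longrightarrow> simple_submod scale N"
proof -
  assume D: DD and N: "second_submod scale N"
  obtain i where i: "i < n" "N \<subseteq> K i" using sec_in[OF N] by blast
  have "N = K i" using eq_K[of i N] D i N by (auto simp: second_submod_def submod_def)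
  then show ?thesis using D i by simp
qed

lemma T1D: "multiplication_module scale \<Longrightarrow> DD"
proof (intro allI impI)
  fix i assume M: "multiplication_module scale" and i: "i < n"
  show "simple_submod scale (K i)" unfolding simple_submod_def
  proof (intro conjI allI impI)
    show "submod scale (K i)" using Ksub[OF i] by (simp add: submod_def)
    show "K i \<noteq> {0}" using Knz[OF i] .
    fix L assume L: "submod scale L \<and> L \<subseteq> K i"
    then obtain I where I: "L = ideal_mult scale I UNIV" using M by (auto simp: multiplication_module_def)
    show "L = {0} \<or> L = K i"
    proof (cases "I \<subseteq> Ann scale (K i)")
      case True
      have "z = 0" if "z \<in> L" for z
      proof -
        have "ee i *s z = 0" using ann_IM[OF i True] that I by blast
        moreover have "ee i *s z = z" using E1[OF i] that L by blast
        ultimately show ?thesis by simp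
      qed
      moreover have "0 \<in> L" using L subspace_0 by (simp add: submod_def)
      ultimately show ?thesis by blast
    next
      case False
      then obtain r where "r \<in> I" "r \<notin> Ann scale (K i)" by blast
      then have "K i \<subseteq> L" using K_IM[OF i] I by blast
      then show ?thesis using L by blast
    qed
  qed
qed

lemma TD1: "DD \<Longrightarrow> multiplication_module scale"
  unfolding multiplication_module_def
proof (intro allI impI)
  fix N assume D: DD and N: "submod scale N"
  have sub: "subspace N" using N by (simp add: submod_def)
  define I where "I = {r. \<forall>x. r *s x \<in> N}"
  have I: "ring_ideal I"
  proof (rule ring_idealI)
    show "0 \<in> I" using subspace_0[OF sub] by (simp add: I_def)
    show "x + y \<in> I" if "x \<in> I" "y \<in> I" for x y
      using that subspace_add[OF sub] by (simp add: I_def scale_left_distrib)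
    show "c * x \<in> I" if "x \<in> I" for c x
      using that subspace_scale[OF sub] by (simp add: I_def mult.commute flip: scale_scale)
  qed
  have "N = ideal_mult scale I UNIV"
  proof
    show "ideal_mult scale I UNIV \<subseteq> N" by (rule IM_sub[OF sub]) (simp add: I_def)
  next
    show "N \<subseteq> ideal_mult scale I UNIV"
    proof
      fix z assume z: "z \<in> N"
      have "(\<Sum>i<n. ee i *s z) \<in> ideal_mult scale I UNIV"
        unfolding ideal_mult_def
      proof (rule span_sum)
        fix i assume "i \<in> {..<n}"
        then have i: "i < n" by simp
        show "ee i *s z \<in> span {scale r x |r x. r \<in> I \<and> x \<in> UNIV}"
        proof (cases "ee i *s z = 0")
          case True then show ?thesis by (simp add: span_zero)
        next
          case False
          have "K i \<subseteq> N" using fill[OF _ sub subspace_scale[OF sub z] E3[OF i] False] D i by blast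
          then have "ee i \<in> I" using E3[OF i] by (auto simp: I_def)
          then show ?thesis by (intro span_base) blast
        qed
      qed
      then show "z \<in> ideal_mult scale I UNIV" using E4[of z] by simp
    qed
  qed
  then show "\<exists>I. ring_ideal I \<and> N = ideal_mult scale I UNIV" using I by blast
qed

lemma T4D: "comultiplication_module scale \<Longrightarrow> DD"
proof (intro allI impI)
  fix i assume M: "comultiplication_module scale" and i: "i < n"
  show "simple_submod scale (K i)" unfolding simple_submod_def
  proof (intro conjI allI impI)
    show "submod scale (K i)" using Ksub[OF i] by (simp add: submod_def)
    show "K i \<noteq> {0}" using Knz[OF i] .
    fix L assume L: "submod scale L \<and> L \<subseteq> K i"
    show "L = {0} \<or> L = K i"
    proof (cases "L = {0}")
      case True then show ?thesis by simp
    next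
      case False
      then obtain y where y: "y \<in> L" "y \<noteq> 0" using nz L by (auto simp: submod_def)
      have LL: "L = colon_M scale (Ann scale L)" using M L by (simp add: comultiplication_module_def)
      have "K i \<subseteq> colon_M scale (Ann scale L)"
      proof
        fix x assume x: "x \<in> K i"
        show "x \<in> colon_M scale (Ann scale L)" unfolding colon_M_def
        proof (intro CollectI ballI)
          fix r assume "r \<in> Ann scale L"
          then have "r *s y = 0" using y by (auto simp: Ann_def)
          then have "r \<in> Ann scale (K i)" using ann_elem[OF i _ y(2)] y L by blast
          then show "r *s x = 0" using x by (auto simp: Ann_def)
        qed
      qed
      then show ?thesis using LL L by blast
    qed
  qed
qed

lemma TD4: "DD \<Longrightarrow> comultiplication_module scale"
  unfolding comultiplication_module_def
proof (intro allI impI)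
  fix N assume D: DD and N: "submod scale N"
  have sub: "subspace N" using N by (simp add: submod_def)
  show "N = colon_M scale (Ann scale N)"
  proof
    show "N \<subseteq> colon_M scale (Ann scale N)" by (auto simp: colon_M_def Ann_def)
  next
    show "colon_M scale (Ann scale N) \<subseteq> N"
    proof
      fix x assume x: "x \<in> colon_M scale (Ann scale N)"
      have "(\<Sum>i<n. ee i *s x) \<in> N"
      proof (rule subspace_sum[OF sub])
        fix i assume "i \<in> {..<n}"
        then have i: "i < n" by simp
        show "ee i *s x \<in> N"
        proof (cases "\<exists>k\<in>N. ee i *s k \<noteq> 0")
          case True
          then obtain k where k: "k \<in> N" "ee i *s k \<noteq> 0" by blast
          have "K i \<subseteq> N" using fill[OF _ sub subspace_scale[OF sub k(1)] E3[OF i] k(2)] D i by blast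
          then show ?thesis using E3[OF i] by blast
        next
          case False
          then have "ee i \<in> Ann scale N" by (auto simp: Ann_def)
          then show ?thesis using x subspace_0[OF sub] by (auto simp: colon_M_def)
        qed
      qed
      then show "x \<in> N" using E4[of x] by simp
    qed
  qed
qed

lemma T2D: "(\<forall>N. ps_hollow scale N \<longrightarrow> simple_submod scale N) \<Longrightarrow> DD"
proof (intro allI impI)
  fix i assume H: "\<forall>N. ps_hollow scale N \<longrightarrow> simple_submod scale N" and i: "i < n"
  have "ps_hollow scale (K i)" unfolding ps_hollow_def
  proof (intro conjI allI impI)
    show "submod scale (K i)" using Ksub[OF i] by (simp add: submod_def)
    show "K i \<noteq> {0}" using Knz[OF i] .
    fix I L assume IL: "ring_ideal I \<and> submod scale L"
      and S: "K i \<subseteq> sum_submod (ideal_mult scale I UNIV) L"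
    show "K i \<subseteq> ideal_mult scale I UNIV \<or> K i \<subseteq> L"
    proof (cases "I \<subseteq> Ann scale (K i)")
      case True
      have "w \<in> L" if w: "w \<in> K i" for w
      proof -
        obtain a b where ab: "w = a + b" "a \<in> ideal_mult scale I UNIV" "b \<in> L"
          using S w by (auto simp: sum_submod_def)
        have "ee i *s a = 0" using ann_IM[OF i True ab(2)] .
        then have "ee i *s w = ee i *s b" using ab(1) by (simp add: scale_right_distrib)
        moreover have "ee i *s w = w" using E1[OF i w] .
        moreover have "ee i *s b \<in> L" using IL ab(3) subspace_scale by (simp add: submod_def)
        ultimately show ?thesis by simp
      qed
      then show ?thesis by blast
    next
      case False
      then obtain r where "r \<in> I" "r \<notin> Ann scale (K i)" by blast
      then show ?thesis using K_IM[OF i] by blast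
    qed
  qed
  then show "simple_submod scale (K i)" using H by blast
qed

lemma TD2: "DD \<Longrightarrow> ps_hollow scale N \<Longrightarrow> simple_submod scale N"
proof -
  assume D: DD and N: "ps_hollow scale N"
  have sub: "subspace N" using N by (simp add: ps_hollow_def submod_def)
  have "N \<noteq> {0}" using N by (simp add: ps_hollow_def)
  then obtain y where y: "y \<in> N" "y \<noteq> 0" using nz[OF _ sub] by blast
  obtain i where i: "i < n" and ey: "ee i *s y \<noteq> 0" using exists_i[OF y(2)] by blast
  define I where "I = range (\<lambda>k. k * ee i)"
  define L where "L = {x. ee i *s x = 0}"
  have I: "ring_ideal I" unfolding I_def by (rule princ_ideal)
  have L: "submod scale L" unfolding submod_def L_def
    by (auto simp: subspace_def scale_right_distrib scale_left_commute[of "ee i"] simp del: scale_scale)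
  have eiI: "ee i \<in> I" unfolding I_def by (metis mult_1 rangeI)
  have "N \<subseteq> sum_submod (ideal_mult scale I UNIV) L"
  proof
    fix w assume "w \<in> N"
    have "ee i *s w \<in> ideal_mult scale I UNIV" unfolding ideal_mult_def
      by (rule span_base) (use eiI in blast)
    moreover have "w - ee i *s w \<in> L" unfolding L_def using E5[OF i, of w]
      by (simp add: scale_right_diff_distrib del: scale_scale)
    moreover have "w = ee i *s w + (w - ee i *s w)" by simp
    ultimately show "w \<in> sum_submod (ideal_mult scale I UNIV) L" unfolding sum_submod_def by blast
  qed
  then have "N \<subseteq> ideal_mult scale I UNIV \<or> N \<subseteq> L" using N I L by (simp add: ps_hollow_def)
  moreover have "\<not> N \<subseteq> L" using y ey by (auto simp: L_def)
  ultimately have NI: "N \<subseteq> ideal_mult scale I UNIV" by blast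
  have "ideal_mult scale I UNIV \<subseteq> K i"
  proof (rule IM_sub[OF Ksub[OF i]])
    fix r x assume "r \<in> I"
    then obtain k where "r = k * ee i" by (auto simp: I_def)
    moreover have "k *s (ee i *s x) \<in> K i" using E3[OF i] subspace_scale[OF Ksub[OF i]] by blast
    ultimately show "r *s x \<in> K i" by simp
  qed
  then have "N = K i" using eq_K[of i N] D i NI sub N by (auto simp: ps_hollow_def)
  then show ?thesis using D i by simp
qed

end

theorem corollary5p19:
  fixes scale :: "'a::comm_ring_1 \<Rightarrow> 'm::ab_group_add \<Rightarrow> 'm"
    and n :: nat and K :: "nat \<Rightarrow> 'm set"
  assumes "module scale"
    and "semisimple_module scale"
    and "min_second_rep scale n K"
    and "Ann scale ` K ` {..<n} = Min_set (Ann scale ` K ` {..<n})"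
  shows "(multiplication_module scale \<longleftrightarrow> (\<forall>N. ps_hollow scale N \<longrightarrow> simple_submod scale N))
       \<and> ((\<forall>N. ps_hollow scale N \<longrightarrow> simple_submod scale N) \<longleftrightarrow> (\<forall>N. second_submod scale N \<longrightarrow> simple_submod scale N))
       \<and> ((\<forall>N. second_submod scale N \<longrightarrow> simple_submod scale N) \<longleftrightarrow> comultiplication_module scale)"
proof -
  interpret crep scale n K
    by (rule crep.intro, rule csetup.intro, rule assms(1), rule csetup_axioms.intro, rule assms(2),
        rule crep_axioms.intro, rule assms(3))
  have a: "multiplication_module scale \<longleftrightarrow> DD" using T1D TD1 by blast
  have b: "(\<forall>N. ps_hollow scale N \<longrightarrow> simple_submod scale N) \<longleftrightarrow> DD" using T2D TD2 by blast
  have c: "(\<forall>N. second_submod scale N \<longrightarrow> simple_submod scale N) \<longleftrightarrow> DD" using T3D TD3 by blast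
  have d: "comultiplication_module scale \<longleftrightarrow> DD" using T4D TD4 by blast
  show ?thesis using a b c d by blast
qed

end
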